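(* Let $K_{1,n}$ be the star graph with $n+1$ vertices and $n$ edges. Then $\mathcal{P}_d(\mathcal{E}_{K_{1,n}})=\emptyset$ for every $d\geq n+1$.
   Context: Work over an algebraically closed field $k$. The Fomin–Kirillov algebra $\mathcal{E}_m$ is the graded $k$-algebra generated by degree-$1$ elements $x_{ij}$, $1\leq i<j\leq m$, subject to: $x_{ij}^2=0$; $x_{ij}x_{kl}=x_{kl}x_{ij}$ whenever $\{i,j\}\cap\{k,l\}=\emptyset$; $x_{ij}x_{jk}-x_{jk}x_{ik}-x_{ik}x_{ij}=0$ and $x_{jk}x_{ij}-x_{ik}x_{jk}-x_{ij}x_{ik}=0$ for $i<j<k$. For a graph $G$ on vertex set $\{1,\dots,m\}$, $\mathcal{E}_G$ is the subalgebra of $\mathcal{E}_m$ generated by the $x_{ij}$ with $\{i,j\}$ an edge of $G$; here $K_{1,n}$ is viewed as a graph on $n+1$ labelled vertices (one centre joined to the other $n$). A degree-$d$ truncated point module over a connected graded algebra $A$ generated in degree $1$ is a graded cyclic module generated in degree $0$ with Hilbert series $1+t+\cdots+t^d$; $\mathcal{P}_d(A)$ is the space of such modules. *)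

theory Defs
  imports "HOL-Computational_Algebra.Polynomial"
begin

definition alg_closed :: "'k::field itself \<Rightarrow> bool" where
  "alg_closed _ \<longleftrightarrow> (\<forall>p :: 'k poly. degree p > 0 \<longrightarrow> (\<exists>x. poly p x = 0))"

text \<open>A noncommutative polynomial is a function from words (lists of generators)
  to coefficients; the word x1 x2 ... xr is the list [x1, x2, ..., xr].\<close>

type_synonym ('g, 'k) ncpoly = "'g list \<Rightarrow> 'k"

definition mono :: "'g list \<Rightarrow> ('g, 'k::field) ncpoly" where
  "mono w = (\<lambda>u. if u = w then 1 else 0)"

definition padd :: "('g, 'k::field) ncpoly \<Rightarrow> ('g, 'k) ncpoly \<Rightarrow> ('g, 'k) ncpoly" where
  "padd p q = (\<lambda>w. p w + q w)"

definition psub :: "('g, 'k::field) ncpoly \<Rightarrow> ('g, 'k) ncpoly \<Rightarrow> ('g, 'k) ncpoly" where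
  "psub p q = (\<lambda>w. p w - q w)"

definition psmult :: "'k::field \<Rightarrow> ('g, 'k) ncpoly \<Rightarrow> ('g, 'k) ncpoly" where
  "psmult c p = (\<lambda>w. c * p w)"

definition pmul :: "('g, 'k::field) ncpoly \<Rightarrow> ('g, 'k) ncpoly \<Rightarrow> ('g, 'k) ncpoly" where
  "pmul p q = (\<lambda>w. \<Sum>i\<in>{0..length w}. p (take i w) * q (drop i w))"

inductive_set two_sided_ideal :: "('g, 'k::field) ncpoly set \<Rightarrow> ('g, 'k) ncpoly set"
  for R where
    zero: "(\<lambda>_. 0) \<in> two_sided_ideal R"
  | gen: "r \<in> R \<Longrightarrow> pmul (pmul (psmult c (mono u)) r) (mono v) \<in> two_sided_ideal R"
  | add: "p \<in> two_sided_ideal R \<Longrightarrow> q \<in> two_sided_ideal R \<Longrightarrow> padd p q \<in> two_sided_ideal R"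

text \<open>Generator x_ij (1 \<le> i < j \<le> m) is represented by the pair (i,j).\<close>

definition fk_gens :: "nat \<Rightarrow> (nat \<times> nat) set" where
  "fk_gens m = {(i, j). 1 \<le> i \<and> i < j \<and> j \<le> m}"

definition fk_rels :: "nat \<Rightarrow> (nat \<times> nat, 'k::field) ncpoly set" where
  "fk_rels m =
     {mono [(i, j), (i, j)] | i j. (i, j) \<in> fk_gens m}
   \<union> {psub (mono [(i, j), (k, l)]) (mono [(k, l), (i, j)]) | i j k l.
        (i, j) \<in> fk_gens m \<and> (k, l) \<in> fk_gens m \<and> {i, j} \<inter> {k, l} = {}}
   \<union> {psub (psub (mono [(i, j), (j, k)]) (mono [(j, k), (i, k)])) (mono [(i, k), (i, j)]) | i j k.
        1 \<le> i \<and> i < j \<and> j < k \<and> k \<le> m}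
   \<union> {psub (psub (mono [(j, k), (i, j)]) (mono [(i, k), (j, k)])) (mono [(i, j), (i, k)]) | i j k.
        1 \<le> i \<and> i < j \<and> j < k \<and> k \<le> m}"

definition fk_ideal :: "nat \<Rightarrow> (nat \<times> nat, 'k::field) ncpoly set" where
  "fk_ideal m = two_sided_ideal (fk_rels m)"

definition free_alg :: "'g set \<Rightarrow> ('g, 'k::field) ncpoly set" where
  "free_alg E = {f. finite {w. f w \<noteq> 0} \<and> (\<forall>w. f w \<noteq> 0 \<longrightarrow> set w \<subseteq> E)}"

text \<open>The subalgebra E_G of E_m generated by the x_e, e \<in> E, is the image of
  free_alg E in E_m = free_alg / J_m, i.e. free_alg E / (free_alg E \<inter> J_m).
  This is its ideal of relations.\<close>

definition subalg_rel_ideal :: "nat \<Rightarrow> (nat \<times> nat) set \<Rightarrow> (nat \<times> nat, 'k::field) ncpoly set" where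
  "subalg_rel_ideal m E = free_alg E \<inter> fk_ideal m"

text \<open>K_{1,n} on vertices 1..n+1 with centre c; edge {c,v} corresponds to x_{min,max}.\<close>

definition star_edges :: "nat \<Rightarrow> nat \<Rightarrow> (nat \<times> nat) set" where
  "star_edges n c = {(min c v, max c v) | v. v \<in> {1..n+1} \<and> v \<noteq> c}"

text \<open>A graded module with Hilbert series 1 + t + ... + t^d: M = k^{d+1}, coordinate i
  being the degree-i component M_i (one-dimensional). A degree-1 generator x_e acts by a
  degree-1 linear map M_i \<rightarrow> M_{i+1}, i.e. by a scalar a i e (and kills M_d).\<close>

definition Mspace :: "nat \<Rightarrow> (nat \<Rightarrow> 'k::field) set" where
  "Mspace d = {v. \<forall>i>d. v i = 0}"

definition gen_act :: "(nat \<Rightarrow> 'g \<Rightarrow> 'k::field) \<Rightarrow> nat \<Rightarrow> 'g \<Rightarrow> (nat \<Rightarrow> 'k) \<Rightarrow> (nat \<Rightarrow> 'k)" where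
  "gen_act a d x v = (\<lambda>j. if j = 0 \<or> j > d then 0 else a (j - 1) x * v (j - 1))"

definition word_act :: "(nat \<Rightarrow> 'g \<Rightarrow> 'k::field) \<Rightarrow> nat \<Rightarrow> 'g list \<Rightarrow> (nat \<Rightarrow> 'k) \<Rightarrow> (nat \<Rightarrow> 'k)" where
  "word_act a d w v = foldr (gen_act a d) w v"

definition poly_act :: "(nat \<Rightarrow> 'g \<Rightarrow> 'k::field) \<Rightarrow> nat \<Rightarrow> ('g, 'k) ncpoly \<Rightarrow> (nat \<Rightarrow> 'k) \<Rightarrow> (nat \<Rightarrow> 'k)" where
  "poly_act a d f v = (\<lambda>j. \<Sum>w\<in>{w. f w \<noteq> 0}. f w * word_act a d w v j)"

definition deg0_gen :: "nat \<Rightarrow> 'k::field" where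
  "deg0_gen = (\<lambda>j. if j = 0 then 1 else 0)"

text \<open>a defines a degree-d truncated point module over E_G (G with edge set E in E_m):
  the action of the free algebra on E factors through E_G (the relations act by 0),
  and M is cyclic, generated by the degree-0 element.\<close>

definition truncated_point_module ::
  "nat \<Rightarrow> (nat \<times> nat) set \<Rightarrow> nat \<Rightarrow> (nat \<Rightarrow> nat \<times> nat \<Rightarrow> 'k::field) \<Rightarrow> bool" where
  "truncated_point_module m E d a \<longleftrightarrow>
     (\<forall>f \<in> subalg_rel_ideal m E. \<forall>v \<in> Mspace d. poly_act a d f v = (\<lambda>_. 0)) \<and>
     (\<forall>v \<in> Mspace d. \<exists>f \<in> free_alg E. v = poly_act a d f deg0_gen)"

text \<open>P_d(E_G): all such module structures (emptiness is independent of taking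
  isomorphism classes).\<close>

definition point_modules :: "'k::field itself \<Rightarrow> nat \<Rightarrow> (nat \<times> nat) set \<Rightarrow> nat \<Rightarrow> (nat \<Rightarrow> nat \<times> nat \<Rightarrow> 'k) set" where
  "point_modules _ m E d = {a. truncated_point_module m E d a}"

end

theory Submission
  imports Defs "HOL-Library.Function_Algebras"
begin


lemma sum_fun_apply: "(sum f A) x = (\<Sum>j\<in>A. f j x)"
  by (induction A rule: infinite_finite_induct) auto

lemma take_len: assumes h: "take (length u) w = u" shows "length u \<le> length w"
proof -
  have "min (length u) (length w) = length u" using arg_cong[OF h, of length] by (simp only: length_take)
  thus ?thesis by simp
qed

definition lm :: "'g list \<Rightarrow> ('g, 'k::field) ncpoly \<Rightarrow> ('g, 'k) ncpoly" where
  "lm u p = (\<lambda>w. if take (length u) w = u then p (drop (length u) w) else 0)"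

definition rm :: "('g, 'k::field) ncpoly \<Rightarrow> 'g list \<Rightarrow> ('g, 'k) ncpoly" where
  "rm p v = (\<lambda>w. if length v \<le> length w \<and> drop (length w - length v) w = v
                  then p (take (length w - length v) w) else 0)"

lemma pmul_left: "pmul (psmult c (mono u)) q = (\<lambda>w. c * lm u q w)"
proof (rule ext)
  fix w :: "'a list"
  have "pmul (psmult c (mono u)) q w =
        (\<Sum>i\<in>{0..length w}. (if i = length u \<and> take (length u) w = u then c * q (drop i w) else 0))"
    unfolding pmul_def psmult_def mono_def
    by (rule sum.cong) (auto simp: min_def split: if_splits)
  also have "\<dots> = (if take (length u) w = u then c * q (drop (length u) w) else 0)"
  proof (cases "take (length u) w = u")
    case True
    have "length u \<le> length w" by (rule take_len[OF True])
    then show ?thesis using True by (simp add: sum.delta_remove if_distrib cong: if_cong)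
  next
    case False then show ?thesis by simp
  qed
  finally show "pmul (psmult c (mono u)) q w = c * lm u q w" by (simp add: lm_def)
qed

lemma take_pref: "take (length u) w = u \<longleftrightarrow> (\<exists>z. w = u @ z)"
  by (metis append_eq_conv_conj append_take_drop_id)

lemma drop_suf: "(length v \<le> length w \<and> drop (length w - length v) w = v) \<longleftrightarrow> (\<exists>z. w = z @ v)"
proof
  assume h: "length v \<le> length w \<and> drop (length w - length v) w = v"
  then show "\<exists>z. w = z @ v" by (metis append_take_drop_id)
next
  assume "\<exists>z. w = z @ v"
  then show "length v \<le> length w \<and> drop (length w - length v) w = v" by auto
qed

lemma lm_app[simp]: "lm u p (u @ z) = p z"
  by (simp add: lm_def)

lemma lm_nonpref: "\<not> (\<exists>z. w = u @ z) \<Longrightarrow> lm u p w = 0"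
  unfolding lm_def using take_pref by metis

lemma rm_app[simp]: "rm p v (z @ v) = p z"
  by (simp add: rm_def)

lemma rm_nonsuf: "\<not> (\<exists>z. w = z @ v) \<Longrightarrow> rm p v w = 0"
  unfolding rm_def using drop_suf by metis

lemma pmul_right: "pmul q (mono v) = rm q v"
proof (rule ext)
  fix w :: "'a list"
  have "pmul q (mono v) w =
        (\<Sum>i\<in>{0..length w}. (if i = length w - length v \<and> length v \<le> length w \<and> drop (length w - length v) w = v then q (take i w) else 0))"
    unfolding pmul_def mono_def
    by (rule sum.cong) auto
  also have "\<dots> = rm q v w"
  proof (cases "length v \<le> length w \<and> drop (length w - length v) w = v")
    case True
    then show ?thesis by (simp add: rm_def sum.delta_remove if_distrib cong: if_cong)
  next
    case False
    then show ?thesis unfolding rm_def by (auto intro!: sum.neutral)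
  qed
  finally show "pmul q (mono v) w = rm q v w" .
qed

lemma lm_mono[simp]: "lm u (mono w) = mono (u @ w)"
proof (rule ext)
  fix x
  show "lm u (mono w) x = mono (u @ w) x"
    by (cases "\<exists>z. x = u @ z") (auto simp: mono_def lm_nonpref split: if_splits)
qed

lemma rm_mono[simp]: "rm (mono w) v = mono (w @ v)"
proof (rule ext)
  fix x
  show "rm (mono w) v x = mono (w @ v) x"
    by (cases "\<exists>z. x = z @ v") (auto simp: mono_def rm_nonsuf split: if_splits)
qed

lemma lm_add: "lm u (p + q) = lm u p + lm u q"
  by (auto simp: lm_def fun_eq_iff)
lemma rm_add: "rm (p + q) v = rm p v + rm q v"
  by (auto simp: rm_def fun_eq_iff)
lemma lm_scal: "lm u (\<lambda>w. c * p w) = (\<lambda>w. c * lm u p w)"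
  by (auto simp: lm_def fun_eq_iff)
lemma rm_scal: "rm (\<lambda>w. c * p w) v = (\<lambda>w. c * rm p v w)"
  by (auto simp: rm_def fun_eq_iff)
lemma lm_zero: "lm u (\<lambda>_. 0) = (\<lambda>_. 0)"
  by (auto simp: lm_def fun_eq_iff)
lemma rm_zero: "rm (\<lambda>_. 0) v = (\<lambda>_. 0)"
  by (auto simp: rm_def fun_eq_iff)

lemma lm_lm: "lm u (lm u' p) = lm (u @ u') p"
proof (rule ext)
  fix w
  show "lm u (lm u' p) w = lm (u @ u') p w"
  proof (cases "\<exists>z. w = u @ u' @ z")
    case True
    then obtain z where z: "w = u @ u' @ z" by blast
    have "lm (u @ u') p w = p z" using lm_app[of "u@u'" p z] z by simp
    then show ?thesis using z by simp
  next
    case False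
    then have "lm (u @ u') p w = 0" by (intro lm_nonpref) auto
    moreover have "lm u (lm u' p) w = 0"
    proof (cases "\<exists>z. w = u @ z")
      case True
      then obtain z where z: "w = u @ z" by blast
      with False have "\<not> (\<exists>z'. z = u' @ z')" by auto
      then show ?thesis using z by (simp add: lm_nonpref)
    next
      case False then show ?thesis by (simp add: lm_nonpref)
    qed
    ultimately show ?thesis by simp
  qed
qed

lemma rm_rm: "rm (rm p v) v' = rm p (v @ v')"
proof (rule ext)
  fix w
  show "rm (rm p v) v' w = rm p (v @ v') w"
  proof (cases "\<exists>z. w = z @ v @ v'")
    case True
    then obtain z where z: "w = z @ v @ v'" by blast
    have "rm p (v @ v') w = p z" using rm_app[of p "v@v'" z] z by simp
    moreover have "rm (rm p v) v' w = p z" using rm_app[of "rm p v" v' "z@v"] z by simp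
    ultimately show ?thesis by simp
  next
    case False
    then have "rm p (v @ v') w = 0" by (intro rm_nonsuf) auto
    moreover have "rm (rm p v) v' w = 0"
    proof (cases "\<exists>z. w = z @ v'")
      case True
      then obtain z where z: "w = z @ v'" by blast
      with False have "\<not> (\<exists>z'. z = z' @ v)" by auto
      then show ?thesis using z by (simp add: rm_nonsuf)
    next
      case False then show ?thesis by (simp add: rm_nonsuf)
    qed
    ultimately show ?thesis by simp
  qed
qed

lemma lm_rm: "lm u (rm p v) = rm (lm u p) v"
proof (rule ext)
  fix w
  show "lm u (rm p v) w = rm (lm u p) v w"
  proof (cases "\<exists>z. w = u @ z @ v")
    case True
    then obtain z where z: "w = u @ z @ v" by blast
    have "lm u (rm p v) w = p z" using z by simp
    moreover have "rm (lm u p) v w = p z" using rm_app[of "lm u p" v "u@z"] z by simp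
    ultimately show ?thesis by simp
  next
    case False
    have "lm u (rm p v) w = 0"
    proof (cases "\<exists>z. w = u @ z")
      case True
      then obtain z where z: "w = u @ z" by blast
      with False have "\<not> (\<exists>z'. z = z' @ v)" by auto
      then show ?thesis using z by (simp add: rm_nonsuf)
    next
      case False then show ?thesis by (simp add: lm_nonpref)
    qed
    moreover have "rm (lm u p) v w = 0"
    proof (cases "\<exists>z. w = z @ v")
      case True
      then obtain z where z: "w = z @ v" by blast
      with False have "\<not> (\<exists>z'. z = u @ z')" by auto
      then show ?thesis using z by (simp add: lm_nonpref)
    next
      case False then show ?thesis by (simp add: rm_nonsuf)
    qed
    ultimately show ?thesis by simp
  qed
qed



abbreviation I :: "('g, 'k::field) ncpoly set \<Rightarrow> ('g, 'k) ncpoly set" where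
  "I R \<equiv> two_sided_ideal R"

lemma lm_Nil[simp]: "lm [] p = p" by (simp add: lm_def)
lemma rm_Nil[simp]: "rm p [] = p" by (simp add: rm_def)

lemma I_gen: "r \<in> R \<Longrightarrow> (\<lambda>w. c * lm u (rm r v) w) \<in> I R"
proof -
  assume "r \<in> R"
  then have "pmul (pmul (psmult c (mono u)) r) (mono v) \<in> I R" by (rule two_sided_ideal.gen)
  moreover have "pmul (pmul (psmult c (mono u)) r) (mono v) = (\<lambda>w. c * lm u (rm r v) w)"
    by (simp add: pmul_left pmul_right rm_scal lm_rm)
  ultimately show ?thesis by simp
qed

lemma padd_eq: "padd p q = p + q" by (simp add: padd_def fun_eq_iff)

lemma I_add: "p \<in> I R \<Longrightarrow> q \<in> I R \<Longrightarrow> p + q \<in> I R"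
  using two_sided_ideal.add[of p R q] by (simp add: padd_eq)

lemma I_zero: "0 \<in> I R"
  using two_sided_ideal.zero by (simp add: zero_fun_def)

lemma I_scal: "p \<in> I R \<Longrightarrow> (\<lambda>w. c * p w) \<in> I R"
proof (induction rule: two_sided_ideal.induct)
  case zero
  then show ?case using two_sided_ideal.zero by simp
next
  case (gen r c' u v)
  have "(\<lambda>w. c * pmul (pmul (psmult c' (mono u)) r) (mono v) w) = (\<lambda>w. (c * c') * lm u (rm r v) w)"
    by (simp add: pmul_left pmul_right rm_scal lm_rm mult.assoc)
  then show ?case using I_gen[OF gen] by simp
next
  case (add p q)
  have "(\<lambda>w. c * padd p q w) = (\<lambda>w. c * p w) + (\<lambda>w. c * q w)"
    by (simp add: padd_def fun_eq_iff algebra_simps)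
  then show ?case using add I_add by simp
qed

lemma I_lm: "p \<in> I R \<Longrightarrow> lm u' p \<in> I R"
proof (induction rule: two_sided_ideal.induct)
  case zero
  then show ?case using two_sided_ideal.zero by (simp add: lm_zero)
next
  case (gen r c u v)
  have "lm u' (pmul (pmul (psmult c (mono u)) r) (mono v)) = (\<lambda>w. c * lm (u' @ u) (rm r v) w)"
    by (simp add: pmul_left pmul_right rm_scal lm_rm lm_scal lm_lm)
  then show ?case using I_gen[OF gen] by simp
next
  case (add p q)
  show ?case unfolding padd_eq lm_add using add.IH by (rule I_add)
qed

lemma I_rm: "p \<in> I R \<Longrightarrow> rm p v' \<in> I R"
proof (induction rule: two_sided_ideal.induct)
  case zero
  then show ?case using two_sided_ideal.zero by (simp add: rm_zero)
next
  case (gen r c u v)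
  have "rm (pmul (pmul (psmult c (mono u)) r) (mono v)) v' = (\<lambda>w. c * lm u (rm r (v @ v')) w)"
    by (simp add: pmul_left pmul_right rm_scal lm_rm rm_rm)
  then show ?case using I_gen[OF gen] by simp
next
  case (add p q)
  show ?case unfolding padd_eq rm_add using add.IH by (rule I_add)
qed

lemma I_R: "r \<in> R \<Longrightarrow> r \<in> I R"
  using I_gen[of r R 1 "[]" "[]"] by simp

lemma I_neg: "p \<in> I R \<Longrightarrow> - p \<in> I R"
proof -
  assume "p \<in> I R"
  then have "(\<lambda>w. (-1) * p w) \<in> I R" by (rule I_scal)
  moreover have "(\<lambda>w. (-1) * p w) = - p" by (simp add: fun_eq_iff)
  ultimately show ?thesis by simp
qed

lemma I_diff: "p \<in> I R \<Longrightarrow> q \<in> I R \<Longrightarrow> p - q \<in> I R"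
  using I_add[OF _ I_neg] by (metis diff_conv_add_uminus)

lemma I_sum: "finite A \<Longrightarrow> (\<And>j. j \<in> A \<Longrightarrow> f j \<in> I R) \<Longrightarrow> sum f A \<in> I R"
  by (induction A rule: finite_induct) (auto intro: I_add I_zero)



section \<open>Signed words\<close>

definition sg :: "nat \<times> nat \<Rightarrow> 'k::field" where
  "sg x = (if fst x < snd x then 1 else -1)"

definition gn :: "nat \<times> nat \<Rightarrow> nat \<times> nat" where
  "gn x = (min (fst x) (snd x), max (fst x) (snd x))"

definition sgl :: "(nat \<times> nat) list \<Rightarrow> 'k::field" where
  "sgl l = prod_list (map sg l)"

definition W :: "(nat \<times> nat) list \<Rightarrow> (nat \<times> nat, 'k::field) ncpoly" where
  "W l = (\<lambda>w. sgl l * mono (map gn l) w)"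

definition sw :: "(nat \<times> nat) list \<Rightarrow> (nat \<times> nat, 'k::field) ncpoly \<Rightarrow> (nat \<times> nat) list \<Rightarrow> (nat \<times> nat, 'k) ncpoly" where
  "sw l1 p l2 = (\<lambda>w. sgl l1 * sgl l2 * lm (map gn l1) (rm p (map gn l2)) w)"

lemma sgl_append[simp]: "sgl (l1 @ l2) = sgl l1 * sgl l2"
  by (simp add: sgl_def)
lemma sgl_Cons[simp]: "sgl (x # l) = sg x * sgl l"
  by (simp add: sgl_def)
lemma sgl_Nil[simp]: "sgl [] = 1"
  by (simp add: sgl_def)

lemma I_sw: "p \<in> I R \<Longrightarrow> sw l1 p l2 \<in> I R"
  unfolding sw_def by (intro I_scal I_lm I_rm)

lemma sw_add: "sw l1 (p + q) l2 = sw l1 p l2 + sw l1 q l2"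
  by (simp add: sw_def lm_add rm_add fun_eq_iff distrib_left)

lemma lm_neg: "lm u (- p) = - lm u p"
  by (auto simp: lm_def fun_eq_iff)
lemma rm_neg: "rm (- p) v = - rm p v"
  by (auto simp: rm_def fun_eq_iff)

lemma sw_neg: "sw l1 (- p) l2 = - sw l1 p l2"
  by (simp add: sw_def lm_neg rm_neg fun_eq_iff)

lemma sw_diff: "sw l1 (p - q) l2 = sw l1 p l2 - sw l1 q l2"
  by (metis diff_conv_add_uminus sw_add sw_neg)

lemma sw_zero: "sw l1 0 l2 = 0"
  by (simp add: sw_def zero_fun_def lm_zero rm_zero)

lemma sw_sum: "sw l1 (sum f A) l2 = (\<Sum>j\<in>A. sw l1 (f j) l2)"
proof (induction A rule: infinite_finite_induct)
  case (infinite A)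
  then show ?case by (metis sum.infinite sw_zero)
next
  case empty
  then show ?case by (simp only: sum.empty sw_zero)
next
  case (insert x F)
  have e1: "sum f (insert x F) = f x + sum f F" using insert(1,2) by (rule sum.insert)
  have e2: "(\<Sum>j\<in>insert x F. sw l1 (f j) l2) = sw l1 (f x) l2 + (\<Sum>j\<in>F. sw l1 (f j) l2)"
    using insert(1,2) by (rule sum.insert)
  show ?case unfolding e1 e2 sw_add insert(3) ..
qed

lemma sw_W: "sw l1 (W l) l2 = W (l1 @ l @ l2)"
  by (simp add: sw_def W_def rm_scal lm_scal fun_eq_iff mult_ac)

lemma sg_flip: "a \<noteq> b \<Longrightarrow> sg (b, a) = - sg (a, b)"
  by (cases "a < b") (simp_all add: sg_def)

lemma gn_flip: "gn (b, a) = gn (a, b)"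
  by (simp add: gn_def min.commute max.commute)

lemma W_flip: "a \<noteq> b \<Longrightarrow> W (l1 @ (b, a) # l2) = - W (l1 @ (a, b) # l2)"
proof -
  assume ab: "a \<noteq> b"
  show ?thesis unfolding W_def by (simp add: sg_flip[OF ab] gn_flip fun_eq_iff)
qed



lemma J_add: "p \<in> fk_ideal m \<Longrightarrow> q \<in> fk_ideal m \<Longrightarrow> p + q \<in> fk_ideal m"
  unfolding fk_ideal_def by (rule I_add)
lemma J_diff: "p \<in> fk_ideal m \<Longrightarrow> q \<in> fk_ideal m \<Longrightarrow> p - q \<in> fk_ideal m"
  unfolding fk_ideal_def by (rule I_diff)
lemma J_zero: "0 \<in> fk_ideal m"
  unfolding fk_ideal_def by (rule I_zero)
lemma J_sw: "p \<in> fk_ideal m \<Longrightarrow> sw l1 p l2 \<in> fk_ideal m"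
  unfolding fk_ideal_def by (rule I_sw)
lemma J_sum: "finite A \<Longrightarrow> (\<And>j. j \<in> A \<Longrightarrow> f j \<in> fk_ideal m) \<Longrightarrow> sum f A \<in> fk_ideal m"
  unfolding fk_ideal_def by (rule I_sum)

definition valid :: "nat \<Rightarrow> nat \<times> nat \<Rightarrow> bool" where
  "valid m x \<longleftrightarrow> fst x \<noteq> snd x \<and> fst x \<in> {1..m} \<and> snd x \<in> {1..m}"

definition disj :: "nat \<times> nat \<Rightarrow> nat \<times> nat \<Rightarrow> bool" where
  "disj x y \<longleftrightarrow> {fst x, snd x} \<inter> {fst y, snd y} = {}"

lemma gn_gens: "valid m x \<Longrightarrow> gn x \<in> fk_gens m"
  by (auto simp: valid_def gn_def fk_gens_def min_def max_def)

lemma sg_sq: "a \<noteq> b \<Longrightarrow> sg (a, b) * sg (a, b) = (1::'k::field)"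
  by (simp add: sg_def)

lemma W2: "W [x, y] = (\<lambda>w. sg x * sg y * mono [gn x, gn y] w)"
  by (simp add: W_def sgl_def fun_eq_iff)

lemma Sq: "valid m x \<Longrightarrow> (W [x, x] :: (nat \<times> nat, 'k::field) ncpoly) \<in> fk_ideal m"
proof -
  assume v: "valid m x"
  obtain a b where x: "x = (a, b)" by force
  have ab: "a \<noteq> b" using v x by (simp add: valid_def)
  have "W [x, x] = (mono [gn x, gn x] :: (nat \<times> nat, 'k) ncpoly)"
    unfolding W2 x sg_sq[OF ab] by simp
  moreover have "(mono [gn x, gn x] :: (nat \<times> nat, 'k) ncpoly) \<in> fk_rels m"
  proof -
    obtain i j where g: "gn x = (i, j)" by force
    have "(mono [(i, j), (i, j)] :: (nat \<times> nat, 'k) ncpoly) \<in> {mono [(i, j), (i, j)] |i j. (i, j) \<in> fk_gens m}"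
      using gn_gens[OF v] g by auto
    then show ?thesis unfolding fk_rels_def g by (intro UnI1)
  qed
  ultimately show ?thesis unfolding fk_ideal_def using I_R by metis
qed

lemma Comm:
  assumes "valid m x" "valid m y" "disj x y"
  shows "(W [x, y] - W [y, x] :: (nat \<times> nat, 'k::field) ncpoly) \<in> fk_ideal m"
proof -
  have "(psub (mono [gn x, gn y]) (mono [gn y, gn x]) :: (nat \<times> nat, 'k) ncpoly) \<in> fk_rels m"
  proof -
    have "{fst (gn x), snd (gn x)} \<inter> {fst (gn y), snd (gn y)} = {}"
      using assms(3) by (auto simp: disj_def gn_def min_def max_def)
    moreover obtain i j where g1: "gn x = (i, j)" by force
    moreover obtain k l where g2: "gn y = (k, l)" by force
    ultimately have "(psub (mono [(i, j), (k, l)]) (mono [(k, l), (i, j)]) :: (nat \<times> nat, 'k) ncpoly) \<in>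
       {psub (mono [(i, j), (k, l)]) (mono [(k, l), (i, j)]) | i j k l.
        (i, j) \<in> fk_gens m \<and> (k, l) \<in> fk_gens m \<and> {i, j} \<inter> {k, l} = {}}"
      using gn_gens[OF assms(1)] gn_gens[OF assms(2)] by auto
    note h = this
    show ?thesis unfolding fk_rels_def g1 g2 by (rule UnI1, rule UnI1, rule UnI2, rule h)
  qed
  then have "(\<lambda>w. (sg x * sg y :: 'k) * psub (mono [gn x, gn y]) (mono [gn y, gn x]) w) \<in> fk_ideal m"
    unfolding fk_ideal_def by (intro I_scal I_R)
  moreover have "(\<lambda>w. (sg x * sg y :: 'k) * psub (mono [gn x, gn y]) (mono [gn y, gn x]) w) = W [x, y] - W [y, x]"
    by (simp add: W2 psub_def fun_eq_iff algebra_simps)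
  ultimately show ?thesis by simp
qed

definition T :: "nat \<Rightarrow> nat \<Rightarrow> nat \<Rightarrow> (nat \<times> nat, 'k::field) ncpoly" where
  "T a b e = W [(a, b), (b, e)] + W [(b, e), (e, a)] + W [(e, a), (a, b)]"

lemma T_rot: "T a b e = T b e a"
  unfolding T_def by (simp add: add_ac)

lemma T_base1:
  assumes "1 \<le> i" "i < j" "j < k" "k \<le> m"
  shows "(T i j k :: (nat \<times> nat, 'k::field) ncpoly) \<in> fk_ideal m"
proof -
  have "T i j k = (psub (psub (mono [(i, j), (j, k)]) (mono [(j, k), (i, k)])) (mono [(i, k), (i, j)]) :: (nat \<times> nat, 'k) ncpoly)"
    using assms by (simp add: T_def W2 psub_def fun_eq_iff sg_def gn_def)
  moreover have "(psub (psub (mono [(i, j), (j, k)]) (mono [(j, k), (i, k)])) (mono [(i, k), (i, j)]) :: (nat \<times> nat, 'k) ncpoly) \<in> fk_rels m"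
  proof -
    have "(psub (psub (mono [(i, j), (j, k)]) (mono [(j, k), (i, k)])) (mono [(i, k), (i, j)]) :: (nat \<times> nat, 'k) ncpoly) \<in>
      {psub (psub (mono [(i, j), (j, k)]) (mono [(j, k), (i, k)])) (mono [(i, k), (i, j)]) | i j k.
        1 \<le> i \<and> i < j \<and> j < k \<and> k \<le> m}" (is "_ \<in> ?S") using assms by blast
    note h = this
    show ?thesis unfolding fk_rels_def by (rule UnI1, rule UnI2, rule h)
  qed
  ultimately show ?thesis unfolding fk_ideal_def using I_R by metis
qed

lemma T_base2:
  assumes "1 \<le> i" "i < j" "j < k" "k \<le> m"
  shows "(T k j i :: (nat \<times> nat, 'k::field) ncpoly) \<in> fk_ideal m"
proof -
  have "T k j i = (psub (psub (mono [(j, k), (i, j)]) (mono [(i, k), (j, k)])) (mono [(i, j), (i, k)]) :: (nat \<times> nat, 'k) ncpoly)"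
    using assms by (simp add: T_def W2 psub_def fun_eq_iff sg_def gn_def)
  moreover have "(psub (psub (mono [(j, k), (i, j)]) (mono [(i, k), (j, k)])) (mono [(i, j), (i, k)]) :: (nat \<times> nat, 'k) ncpoly) \<in> fk_rels m"
  proof -
    have "(psub (psub (mono [(j, k), (i, j)]) (mono [(i, k), (j, k)])) (mono [(i, j), (i, k)]) :: (nat \<times> nat, 'k) ncpoly) \<in>
      {psub (psub (mono [(j, k), (i, j)]) (mono [(i, k), (j, k)])) (mono [(i, j), (i, k)]) | i j k.
        1 \<le> i \<and> i < j \<and> j < k \<and> k \<le> m}" using assms by blast
    note h = this
    show ?thesis unfolding fk_rels_def by (rule UnI2, rule h)
  qed
  ultimately show ?thesis unfolding fk_ideal_def using I_R by metis
qed

lemma Tri: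
  assumes "a \<in> {1..m}" "b \<in> {1..m}" "e \<in> {1..m}" "a \<noteq> b" "b \<noteq> e" "a \<noteq> e"
  shows "(T a b e :: (nat \<times> nat, 'k::field) ncpoly) \<in> fk_ideal m"
proof -
  have r1: "T a b e = T b e a" "T a b e = T e a b" by (metis T_rot)+
  consider "a < b" "b < e" | "b < e" "e < a" | "e < a" "a < b" | "a < e" "e < b" | "e < b" "b < a" | "b < a" "a < e"
    using assms by linarith
  then show ?thesis
  proof cases
    case 1 then show ?thesis using T_base1[of a b e m] assms by auto
  next
    case 2 then show ?thesis unfolding r1(1) using T_base1[of b e a m] assms by auto
  next
    case 3 then show ?thesis unfolding r1(2) using T_base1[of e a b m] assms by auto
  next
    case 4 then show ?thesis unfolding r1(1) using T_base2[of a e b m] assms by auto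
  next
    case 5 then show ?thesis using T_base2[of e b a m] assms by auto
  next
    case 6 then show ?thesis unfolding r1(2) using T_base2[of b a e m] assms by auto
  qed
qed

lemma diff_telescope: "(a::'a::ab_group_add) - c = (a - b) + (b - c)"
  by simp

lemma comm_word:
  assumes "valid m e" "\<forall>x\<in>set l. valid m x \<and> disj e x"
  shows "(W (l1 @ e # l @ l2) - W (l1 @ l @ e # l2) :: (nat \<times> nat, 'k::field) ncpoly) \<in> fk_ideal m"
  using assms(2)
proof (induction l arbitrary: l1)
  case Nil
  show ?case using I_zero[of "fk_rels m"] by (simp only: append_Nil diff_self fk_ideal_def)
next
  case (Cons x l)
  have h1: "(W (l1 @ e # x # l @ l2) - W (l1 @ x # e # l @ l2) :: (nat \<times> nat, 'k) ncpoly) \<in> fk_ideal m"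
  proof -
    have "(W [e, x] - W [x, e] :: (nat \<times> nat, 'k) ncpoly) \<in> fk_ideal m"
      using Comm[of m e x] assms(1) Cons.prems by auto
    then have "sw l1 (W [e, x] - W [x, e] :: (nat \<times> nat, 'k) ncpoly) (l @ l2) \<in> fk_ideal m"
      unfolding fk_ideal_def by (rule I_sw)
    then show ?thesis by (simp add: sw_diff sw_W)
  qed
  have p: "\<forall>x\<in>set l. valid m x \<and> disj e x" using Cons.prems by simp
  have h2: "(W ((l1 @ [x]) @ e # l @ l2) - W ((l1 @ [x]) @ l @ e # l2) :: (nat \<times> nat, 'k) ncpoly) \<in> fk_ideal m"
    by (rule Cons.IH[OF p])
  then have h2': "(W (l1 @ x # e # l @ l2) - W (l1 @ x # l @ e # l2) :: (nat \<times> nat, 'k) ncpoly) \<in> fk_ideal m"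
    by (simp only: append_assoc append_Cons append_Nil)
  have eq: "(W (l1 @ e # (x # l) @ l2) - W (l1 @ (x # l) @ e # l2) :: (nat \<times> nat, 'k) ncpoly) =
    (W (l1 @ e # x # l @ l2) - W (l1 @ x # e # l @ l2)) + (W (l1 @ x # e # l @ l2) - W (l1 @ x # l @ e # l2))"
    by (simp only: diff_telescope append_Cons)
  show ?case unfolding eq by (rule J_add[OF h1 h2'])
qed



definition rw :: "nat list \<Rightarrow> nat \<Rightarrow> nat list" where
  "rw C j = drop j (butlast C) @ [last C, hd C] @ take j (tl C)"

definition S :: "nat \<Rightarrow> nat list \<Rightarrow> (nat \<times> nat, 'k::field) ncpoly" where
  "S c C = (\<Sum>j<length C. W (map (Pair c) (rw C j)))"

lemma drop_butlast_last: "j < length L \<Longrightarrow> drop j (butlast L) @ [last L] = drop j L"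
proof -
  assume j: "j < length L"
  then have "L \<noteq> []" by auto
  then have L: "L = butlast L @ [last L]" by simp
  have "j \<le> length (butlast L)" using j by simp
  then have "drop j (butlast L @ [last L]) = drop j (butlast L) @ [last L]" by simp
  then show ?thesis using L by metis
qed

lemma take_Suc_snoc: "take (Suc j) (M @ [b]) = hd (M @ [b]) # take j (tl (M @ [b]))"
  by (cases M) auto

lemma rw_split: "rw (a # M @ [b]) j = drop j (a # M) @ [b, a] @ take j (M @ [b])"
  by (simp add: rw_def butlast_append)

lemma rw_left: "j < Suc (length M) \<Longrightarrow> rw (a # M) j = drop j (a # M) @ [a] @ take j (M @ [b])"
proof -
  assume j: "j < Suc (length M)"
  have "rw (a # M) j = drop j (butlast (a # M)) @ [last (a # M)] @ [a] @ take j M"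
    by (simp add: rw_def)
  also have "\<dots> = drop j (a # M) @ [a] @ take j M"
    using drop_butlast_last[of j "a # M"] j by simp
  also have "take j M = take j (M @ [b])" using j by simp
  finally show ?thesis .
qed

lemma rw_right: "rw (M @ [b]) j = drop (Suc j) (a # M) @ [b] @ take (Suc j) (M @ [b])"
proof -
  have "rw (M @ [b]) j = drop j M @ [b, hd (M @ [b])] @ take j (tl (M @ [b]))"
    by (simp add: rw_def)
  then show ?thesis using take_Suc_snoc[of j M b] by simp
qed

lemma comb_identity:
  "(s::'a::ab_group_add) - (u - v) = (s - (aa + ak - (b0 + bb))) + (aa - u) + (ak - b0) - (bb - v)"
  by (simp add: algebra_simps)

lemma cyc_step:
  assumes c: "c \<in> {1..m}"
    and dist: "distinct (a # M @ [b])"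
    and lv: "\<forall>v\<in>set (a # M @ [b]). v \<in> {1..m} \<and> v \<noteq> c"
  shows "(S c (a # M @ [b]) - (sw [] (S c (a # M)) [(a, b)] - sw [(a, b)] (S c (M @ [b])) [])
          :: (nat \<times> nat, 'k::field) ncpoly) \<in> fk_ideal m"
proof -
  define K where "K = Suc (length M)"
  define t where "t = (a, b)"
  define P where "P j = map (Pair c) (drop j (a # M))" for j
  define Q where "Q j = map (Pair c) (take j (M @ [b]))" for j
  define rot :: "nat \<Rightarrow> (nat \<times> nat, 'k) ncpoly" where "rot j = W (P j @ [(c, b), (c, a)] @ Q j)" for j
  define A :: "nat \<Rightarrow> (nat \<times> nat, 'k) ncpoly" where "A j = W (P j @ [(c, a), t] @ Q j)" for j
  define B :: "nat \<Rightarrow> (nat \<times> nat, 'k) ncpoly" where "B j = W (P j @ [t, (c, b)] @ Q j)" for j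
  define U :: "nat \<Rightarrow> (nat \<times> nat, 'k) ncpoly" where "U j = W (map (Pair c) (rw (a # M) j) @ [t])" for j
  define V :: "nat \<Rightarrow> (nat \<times> nat, 'k) ncpoly" where "V j = W (t # map (Pair c) (rw (M @ [b]) j))" for j
  have ab: "a \<noteq> b" and ac: "a \<noteq> c" and bc: "b \<noteq> c" and am: "a \<in> {1..m}" and bm: "b \<in> {1..m}"
    using dist lv by auto
  have vt: "valid m t" using ab am bm by (simp add: valid_def t_def)
  have dM: "\<forall>x\<in>set (map (Pair c) M). valid m x \<and> disj t x"
    using dist lv c by (auto simp: valid_def disj_def t_def)
  have SC: "S c (a # M @ [b]) = (\<Sum>j<Suc K. rot j)"
    unfolding S_def rot_def P_def Q_def K_def by (simp add: rw_split)
  have SU: "sw [] (S c (a # M)) [t] = (\<Sum>j<K. U j)"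
    unfolding S_def U_def K_def sw_sum sw_W by simp
  have SV: "sw [t] (S c (M @ [b])) [] = (\<Sum>j<K. V j)"
    unfolding S_def V_def K_def sw_sum sw_W by simp
  have tri: "rot j - (A j - B j) \<in> fk_ideal m" for j
  proof -
    have "(T c a b :: (nat \<times> nat, 'k) ncpoly) \<in> fk_ideal m"
      using Tri[of c m a b] c am bm ab ac bc by auto
    then have h: "sw (P j) (T c a b :: (nat \<times> nat, 'k) ncpoly) (Q j) \<in> fk_ideal m" by (rule J_sw)
    have e1: "W (P j @ [(a, b), (b, c)] @ Q j) = - (B j)"
      using W_flip[of c b "P j @ [(a, b)]" "Q j"] bc unfolding B_def t_def by simp
    have e2: "W (P j @ [(b, c), (c, a)] @ Q j) = - (rot j)"
      using W_flip[of c b "P j" "(c, a) # Q j"] bc unfolding rot_def by simp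
    have eq: "sw (P j) (T c a b) (Q j) = A j + - B j + - rot j"
      unfolding T_def sw_add sw_W A_def t_def using e1 e2 by simp
    have "A j - B j - rot j = sw (P j) (T c a b) (Q j)"
      unfolding eq by (simp only: diff_conv_add_uminus)
    then have "A j - B j - rot j \<in> fk_ideal m" using h by simp
    then have "- (A j - B j - rot j) \<in> fk_ideal m"
      unfolding fk_ideal_def by (rule I_neg)
    then show ?thesis by (simp add: algebra_simps)
  qed
  have part1: "S c (a # M @ [b]) - (\<Sum>j<Suc K. A j - B j) \<in> fk_ideal m"
  proof -
    have "(\<Sum>j<Suc K. rot j - (A j - B j)) \<in> fk_ideal m"
      by (rule J_sum) (auto intro: tri)
    then show ?thesis unfolding SC by (simp only: sum_subtractf)
  qed
  have part2: "(\<Sum>j<K. A j) - (\<Sum>j<K. U j) \<in> fk_ideal m"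
  proof -
    have "A j - U j \<in> fk_ideal m" if j: "j < K" for j
    proof -
      have dQ: "\<forall>x\<in>set (Q j). valid m x \<and> disj t x"
        using dist lv c j unfolding Q_def K_def
        by (auto simp: valid_def disj_def t_def dest: in_set_takeD)
      have "W ((P j @ [(c, a)]) @ t # Q j @ []) - W ((P j @ [(c, a)]) @ Q j @ t # []) \<in> fk_ideal m"
        by (rule comm_word[OF vt dQ])
      moreover have "map (Pair c) (rw (a # M) j) = P j @ [(c, a)] @ Q j"
        using rw_left[of j M a b] j unfolding P_def Q_def K_def by simp
      ultimately show ?thesis unfolding A_def U_def by simp
    qed
    then have "(\<Sum>j<K. A j - U j) \<in> fk_ideal m" by (intro J_sum) auto
    then show ?thesis by (simp only: sum_subtractf)
  qed
  have part3: "A K - B 0 \<in> fk_ideal m"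
  proof -
    have "W ([(c, a)] @ t # map (Pair c) M @ [(c, b)]) - W ([(c, a)] @ map (Pair c) M @ t # [(c, b)])
          \<in> fk_ideal m"
      by (rule comm_word[OF vt dM])
    then show ?thesis unfolding A_def B_def P_def Q_def K_def by simp
  qed
  have part4: "(\<Sum>j<K. B (Suc j)) - (\<Sum>j<K. V j) \<in> fk_ideal m"
  proof -
    have "V j - B (Suc j) \<in> fk_ideal m" if j: "j < K" for j
    proof -
      have dP: "\<forall>x\<in>set (P (Suc j)). valid m x \<and> disj t x"
        using dist lv c unfolding P_def
        by (auto simp: valid_def disj_def t_def dest: in_set_dropD)
      have "W ([] @ t # P (Suc j) @ (c, b) # Q (Suc j)) - W ([] @ P (Suc j) @ t # (c, b) # Q (Suc j)) \<in> fk_ideal m"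
        by (rule comm_word[OF vt dP])
      moreover have "map (Pair c) (rw (M @ [b]) j) = P (Suc j) @ [(c, b)] @ Q (Suc j)"
        using rw_right[of M b j a] unfolding P_def Q_def by simp
      ultimately show ?thesis unfolding B_def V_def by simp
    qed
    then have "(\<Sum>j<K. V j - B (Suc j)) \<in> fk_ideal m" by (intro J_sum) auto
    then have "- (\<Sum>j<K. V j - B (Suc j)) \<in> fk_ideal m"
      unfolding fk_ideal_def by (rule I_neg)
    then show ?thesis by (simp add: sum_subtractf)
  qed
  have sumAB: "(\<Sum>j<Suc K. A j - B j) = (\<Sum>j<K. A j) + A K - (B 0 + (\<Sum>j<K. B (Suc j)))"
  proof -
    have e1: "(\<Sum>j<Suc K. B j) = B 0 + (\<Sum>j<K. B (Suc j))" by (rule sum.lessThan_Suc_shift)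
    have e2: "(\<Sum>j<Suc K. A j) = (\<Sum>j<K. A j) + A K" by (rule sum.lessThan_Suc)
    show ?thesis by (simp only: sum_subtractf e1 e2)
  qed
  have "S c (a # M @ [b]) - ((\<Sum>j<K. U j) - (\<Sum>j<K. V j)) =
        (S c (a # M @ [b]) - ((\<Sum>j<K. A j) + A K - (B 0 + (\<Sum>j<K. B (Suc j)))))
        + ((\<Sum>j<K. A j) - (\<Sum>j<K. U j)) + (A K - B 0) - ((\<Sum>j<K. B (Suc j)) - (\<Sum>j<K. V j))"
    by (rule comb_identity)
  moreover have "\<dots> \<in> fk_ideal m"
  proof -
    have p1: "S c (a # M @ [b]) - ((\<Sum>j<K. A j) + A K - (B 0 + (\<Sum>j<K. B (Suc j)))) \<in> fk_ideal m"
      using part1 by (simp only: sumAB)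
    show ?thesis by (rule J_diff[OF J_add[OF J_add[OF p1 part2] part3] part4])
  qed
  ultimately have h: "S c (a # M @ [b]) - ((\<Sum>j<K. U j) - (\<Sum>j<K. V j)) \<in> fk_ideal m"
    by metis
  show ?thesis using h by (simp only: SU[symmetric] SV[symmetric] t_def)
qed



lemma cyc:
  assumes c: "c \<in> {1..m}"
  shows "distinct C \<Longrightarrow> C \<noteq> [] \<Longrightarrow> \<forall>v\<in>set C. v \<in> {1..m} \<and> v \<noteq> c \<Longrightarrow>
         (S c C :: (nat \<times> nat, 'k::field) ncpoly) \<in> fk_ideal m"
proof (induction "length C" arbitrary: C rule: less_induct)
  case less
  obtain a C' where C: "C = a # C'" using less.prems(2) by (cases C) auto
  show ?case
  proof (cases "C' = []")
    case True
    have "S c C = (W [(c, a), (c, a)] :: (nat \<times> nat, 'k) ncpoly)"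
      unfolding S_def C True by (simp add: rw_def)
    moreover have "valid m (c, a)" using less.prems(3) c C by (auto simp: valid_def)
    ultimately show ?thesis using Sq by metis
  next
    case False
    define M where "M = butlast C'"
    define b where "b = last C'"
    have C2: "C = a # M @ [b]" using False C unfolding M_def b_def by simp
    have h1: "(S c (a # M) :: (nat \<times> nat, 'k) ncpoly) \<in> fk_ideal m"
      using less.hyps[of "a # M"] less.prems unfolding C2 by auto
    have h2: "(S c (M @ [b]) :: (nat \<times> nat, 'k) ncpoly) \<in> fk_ideal m"
      using less.hyps[of "M @ [b]"] less.prems unfolding C2 by auto
    have st: "(S c (a # M @ [b]) - (sw [] (S c (a # M)) [(a, b)] - sw [(a, b)] (S c (M @ [b])) [])
          :: (nat \<times> nat, 'k::field) ncpoly) \<in> fk_ideal m"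
      using cyc_step[of c m a M b] c less.prems unfolding C2 by auto
    have "(sw [] (S c (a # M)) [(a, b)] - sw [(a, b)] (S c (M @ [b])) [] :: (nat \<times> nat, 'k) ncpoly) \<in> fk_ideal m"
      using J_sw[OF h1] J_sw[OF h2] by (rule J_diff)
    from J_add[OF st this] show ?thesis unfolding C2 by simp
  qed
qed



definition ev :: "nat \<Rightarrow> nat \<Rightarrow> 'k::field" where
  "ev i = (\<lambda>j. if j = i then 1 else 0)"

fun wc :: "(nat \<Rightarrow> 'g \<Rightarrow> 'k::field) \<Rightarrow> nat \<Rightarrow> 'g list \<Rightarrow> 'k" where
  "wc a i [] = 1"
| "wc a i (x # w) = a (i + length w) x * wc a i w"

lemma wa_ev:
  assumes "i \<le> d"
  shows "word_act a d w (ev i) = (if i + length w \<le> d then (\<lambda>j. wc a i w * ev (i + length w) j) else (\<lambda>_. 0))"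
proof (induction w)
  case Nil
  then show ?case using assms by (simp add: word_act_def)
next
  case (Cons x w)
  have wa: "word_act a d (x # w) (ev i) = gen_act a d x (word_act a d w (ev i))"
    by (simp add: word_act_def)
  show ?case
  proof (cases "i + length w \<le> d")
    case True
    then show ?thesis unfolding wa Cons.IH
      by (auto simp: gen_act_def ev_def fun_eq_iff)
  next
    case False
    then show ?thesis unfolding wa Cons.IH
      by (auto simp: gen_act_def ev_def fun_eq_iff)
  qed
qed

lemma wc_snoc: "wc a i (w @ [x]) = a i x * wc a (Suc i) w"
  by (induction w) auto

lemma wc_rev: "wc a i (map h (rev xs)) = (\<Prod>t<length xs. a (i + t) (h (xs ! t)))"
proof (induction xs arbitrary: i)
  case Nil
  then show ?case by simp
next
  case (Cons x xs)
  have "wc a i (map h (rev (x # xs))) = a i (h x) * wc a (Suc i) (map h (rev xs))"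
    by (simp add: wc_snoc)
  also have "\<dots> = a i (h x) * (\<Prod>t<length xs. a (Suc i + t) (h (xs ! t)))"
    using Cons.IH by simp
  also have "\<dots> = (\<Prod>t<length (x # xs). a (i + t) (h ((x # xs) ! t)))"
    unfolding length_Cons prod.lessThan_Suc_shift by simp
  finally show ?case .
qed

lemma poly_act_sumW:
  assumes "finite J0"
  shows "poly_act a d (\<Sum>j\<in>J0. W (L j) :: (nat \<times> nat, 'k::field) ncpoly) v x =
         (\<Sum>j\<in>J0. sgl (L j) * word_act a d (map gn (L j)) v x)"
proof -
  define f :: "(nat \<times> nat, 'k) ncpoly" where "f = (\<Sum>j\<in>J0. W (L j))"
  define A where "A = (\<lambda>j. map gn (L j)) ` J0"
  have fA: "finite A" using assms by (simp add: A_def)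
  have fw: "f w = (\<Sum>j\<in>J0. W (L j) w)" for w
    unfolding f_def by (rule sum_fun_apply)
  have supp: "{w. f w \<noteq> 0} \<subseteq> A"
  proof
    fix w assume "w \<in> {w. f w \<noteq> 0}"
    then have "(\<Sum>j\<in>J0. W (L j) w :: 'k) \<noteq> 0" unfolding fw by simp
    then obtain j where j: "j \<in> J0" and nz: "(W (L j) w :: 'k) \<noteq> 0" by (rule sum.not_neutral_contains_not_neutral)
    from nz have "w = map gn (L j)" unfolding W_def mono_def by (simp split: if_splits)
    then show "w \<in> A" using j unfolding A_def by blast
  qed
  have "poly_act a d f v x = (\<Sum>w\<in>A. f w * word_act a d w v x)"
    unfolding poly_act_def
  proof (rule sum.mono_neutral_left[OF fA supp])
    show "\<forall>i\<in>A - {w. f w \<noteq> 0}. f i * word_act a d i v x = 0" by simp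
  qed
  also have "\<dots> = (\<Sum>w\<in>A. \<Sum>j\<in>J0. W (L j) w * word_act a d w v x)"
    unfolding fw by (rule sum.cong[OF refl]) (rule sum_distrib_right)
  also have "\<dots> = (\<Sum>j\<in>J0. \<Sum>w\<in>A. W (L j) w * word_act a d w v x)"
    by (rule sum.swap)
  also have "\<dots> = (\<Sum>j\<in>J0. sgl (L j) * word_act a d (map gn (L j)) v x)"
  proof (rule sum.cong)
    fix j assume j: "j \<in> J0"
    have "(\<Sum>w\<in>A. W (L j) w * word_act a d w v x) =
          (\<Sum>w\<in>A. if w = map gn (L j) then sgl (L j) * word_act a d w v x else 0)"
      by (rule sum.cong) (simp_all add: W_def mono_def)
    also have "\<dots> = sgl (L j) * word_act a d (map gn (L j)) v x"
    proof -
      have mem: "map gn (L j) \<in> A" using j unfolding A_def by blast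
      show ?thesis using fA mem by (simp add: sum.delta)
    qed
    finally show "(\<Sum>w\<in>A. W (L j) w * word_act a d w v x) = sgl (L j) * word_act a d (map gn (L j)) v x" .
  qed simp
  finally show ?thesis unfolding f_def .
qed



lemma sgl_nz: "sgl l \<noteq> (0::'k::field)"
  by (induction l) (auto simp: sg_def)

lemma length_rw: "C \<noteq> [] \<Longrightarrow> j < length C \<Longrightarrow> length (rw C j) = Suc (length C)"
  by (cases C) (auto simp: rw_def min_def)

lemma rw_last: "1 \<le> j \<Longrightarrow> j < length C \<Longrightarrow> \<exists>Z. rw C j = Z @ [C ! j]"
proof -
  assume j: "1 \<le> j" "j < length C"
  obtain x C' where C: "C = x # C'" using j by (cases C) auto
  have ne: "take j C' \<noteq> []" using j C by auto
  moreover have "last (take j C') = C' ! (j - 1)"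
  proof -
    have "last (take j C') = take j C' ! (length (take j C') - 1)" using ne by (rule last_conv_nth)
    also have "\<dots> = C' ! (j - 1)" using j C by simp
    finally show ?thesis .
  qed
  ultimately have "take j C' = butlast (take j C') @ [C' ! (j - 1)]" by (metis append_butlast_last_id)
  moreover have "C ! j = C' ! (j - 1)" using j C by simp
  ultimately show ?thesis unfolding rw_def C by (metis append.assoc list.sel(3))
qed

lemma rw_0: "C \<noteq> [] \<Longrightarrow> rw C 0 = C @ [hd C]"
  by (simp add: rw_def)



lemma sumW_supp:
  assumes "(\<Sum>j\<in>J0. W (L j) :: (nat \<times> nat, 'k::field) ncpoly) w \<noteq> 0"
  shows "\<exists>j\<in>J0. w = map gn (L j)"
proof -
  have "(\<Sum>j\<in>J0. W (L j) w :: 'k) \<noteq> 0" using assms by (simp only: sum_fun_apply not_False_eq_True)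
  then obtain j where j: "j \<in> J0" and nz: "(W (L j) w :: 'k) \<noteq> 0"
    by (rule sum.not_neutral_contains_not_neutral)
  from nz have "w = map gn (L j)" unfolding W_def mono_def by (simp split: if_splits)
  then show ?thesis using j by blast
qed

lemma set_rw: "C \<noteq> [] \<Longrightarrow> set (rw C j) \<subseteq> set C"
proof -
  assume ne: "C \<noteq> []"
  have 1: "set (drop j (butlast C)) \<subseteq> set C"
    using set_drop_subset[of j "butlast C"] by (meson in_set_butlastD subset_iff)
  have 2: "set (take j (tl C)) \<subseteq> set C"
    using set_take_subset[of j "tl C"] ne by (meson list.set_sel(2) subset_iff)
  show ?thesis unfolding rw_def using 1 2 ne by auto
qed

lemma S_free:
  assumes Egn: "\<forall>u. u \<in> set C \<longrightarrow> gn (c, u) \<in> Ed"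
    and ne: "C \<noteq> []"
  shows "(S c C :: (nat \<times> nat, 'k::field) ncpoly) \<in> free_alg Ed"
proof -
  define L where "L j = map (Pair c) (rw C j)" for j
  have Sdef: "(S c C :: (nat \<times> nat, 'k) ncpoly) = (\<Sum>j\<in>{..<length C}. W (L j))"
    unfolding S_def L_def by simp
  have sub: "{w. (S c C :: (nat \<times> nat, 'k) ncpoly) w \<noteq> 0} \<subseteq> (\<lambda>j. map gn (L j)) ` {..<length C}"
    using sumW_supp[where 'k='k] unfolding Sdef by blast
  have fin: "finite {w. (S c C :: (nat \<times> nat, 'k) ncpoly) w \<noteq> 0}"
    by (rule finite_subset[OF sub]) simp
  have "set w \<subseteq> Ed" if nz: "(S c C :: (nat \<times> nat, 'k) ncpoly) w \<noteq> 0" for w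
  proof -
    have "w \<in> (\<lambda>j. map gn (L j)) ` {..<length C}" using sub nz by blast
    then obtain j where "w = map gn (L j)" by blast
    then show ?thesis using set_rw[OF ne, of j] Egn unfolding L_def by auto
  qed
  then show ?thesis using fin unfolding free_alg_def by blast
qed

lemma nonzero_step:
  assumes H2: "\<forall>v\<in>Mspace d. \<exists>f\<in>free_alg Ed. v = poly_act a d f (ev 0)"
    and s: "s < d"
  shows "\<exists>x\<in>Ed. a s x \<noteq> (0::'k::field)"
proof (rule ccontr)
  assume "\<not> (\<exists>x\<in>Ed. a s x \<noteq> 0)"
  then have z: "\<forall>x\<in>Ed. a s x = 0" by blast
  have "ev (Suc s) \<in> Mspace d" using s by (simp add: Mspace_def ev_def)
  then obtain f where f: "f \<in> free_alg Ed" and fe: "ev (Suc s) = poly_act a d f (ev 0)"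
    using H2 by blast
  have "(1::'k) = ev (Suc s) (Suc s)" by (simp add: ev_def)
  also have "\<dots> = (\<Sum>w\<in>{w. f w \<noteq> 0}. f w * word_act a d w (ev 0) (Suc s))"
    unfolding fe poly_act_def by simp
  also have "\<dots> = 0"
  proof (rule sum.neutral, rule ballI)
    fix w assume w: "w \<in> {w. f w \<noteq> 0}"
    then have sw: "set w \<subseteq> Ed" using f unfolding free_alg_def by blast
    have "word_act a d w (ev 0) (Suc s) = 0"
    proof (cases "length w = Suc s")
      case True
      then obtain x w' where w': "w = x # w'" "length w' = s" by (cases w) auto
      then have "a s x = 0" using z sw by auto
      then have "wc a 0 w = 0" using w' by simp
      then show ?thesis using wa_ev[of 0 d a w] by (simp add: ev_def)
    next
      case False
      then show ?thesis using wa_ev[of 0 d a w] by (simp add: ev_def)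
    qed
    then show "f w * word_act a d w (ev 0) (Suc s) = 0" by simp
  qed
  finally show False by simp
qed



lemma disj_main:
  fixes a :: "nat \<Rightarrow> nat \<times> nat \<Rightarrow> 'k::field"
  assumes c: "c \<in> {1..m}"
    and H1: "\<forall>f. f \<in> free_alg Ed \<longrightarrow> f \<in> fk_ideal m \<longrightarrow> (\<forall>i\<le>d. poly_act a d f (ev i) = (\<lambda>_. 0))"
    and Egn: "\<forall>u. u \<in> {1..m} \<and> u \<noteq> c \<longrightarrow> gn (c, u) \<in> Ed"
    and N: "\<forall>s<d. \<exists>u. u \<in> {1..m} \<and> u \<noteq> c \<and> a s (gn (c, u)) \<noteq> 0"
  shows "1 \<le> k \<Longrightarrow> i + k < d \<Longrightarrow> v \<in> {1..m} \<Longrightarrow> v \<noteq> c \<Longrightarrow> a i (gn (c, v)) \<noteq> 0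
         \<Longrightarrow> a (i + k) (gn (c, v)) = 0"
proof (induction k arbitrary: i v rule: less_induct)
  case (less k)
  show ?case
  proof (rule ccontr)
    assume vk: "a (i + k) (gn (c, v)) \<noteq> 0"
    define \<phi> where "\<phi> s = (SOME u. u \<in> {1..m} \<and> u \<noteq> c \<and> a s (gn (c, u)) \<noteq> 0)" for s
    have \<phi>: "\<phi> s \<in> {1..m} \<and> \<phi> s \<noteq> c \<and> a s (gn (c, \<phi> s)) \<noteq> 0" if "s < d" for s
      unfolding \<phi>_def using N that by (metis (mono_tags, lifting) someI_ex)
    define g where "g t = (if t = 0 \<or> t = k then v else \<phi> (i + t))" for t
    have gp: "g t \<in> {1..m} \<and> g t \<noteq> c \<and> a (i + t) (gn (c, g t)) \<noteq> 0" if "t \<le> k" for t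
    proof (cases "t = 0 \<or> t = k")
      case True
      then show ?thesis using less.prems vk unfolding g_def by auto
    next
      case False
      then show ?thesis using \<phi>[of "i + t"] that less.prems unfolding g_def by auto
    qed
    have bk: "a i (gn (c, g t)) = 0" if t: "1 \<le> t" "t < k" for t
    proof (rule ccontr)
      assume h: "a i (gn (c, g t)) \<noteq> 0"
      have "a (i + t) (gn (c, g t)) = 0"
        using less.IH[of t i "g t"] t less.prems gp[of t] h by auto
      then show False using gp[of t] t by auto
    qed
    have gd: "g s \<noteq> g t" if st: "s < t" "t \<le> k" "\<not> (s = 0 \<and> t = k)" for s t
    proof
      assume eq: "g s = g t"
      have "a (i + s + (t - s)) (gn (c, g s)) = 0"
        using less.IH[of "t - s" "i + s" "g s"] st less.prems gp[of s] by auto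
      moreover have "i + s + (t - s) = i + t" using st by simp
      ultimately show False using gp[of t] st eq by auto
    qed
    define C where "C = rev (map g [1..<Suc k])"
    have lenC: "length C = k" unfolding C_def by simp
    have k1: "1 \<le> k" using less.prems by simp
    have neC: "C \<noteq> []" using k1 lenC by auto
    have distC: "distinct C"
    proof -
      have "inj_on g {1..<Suc k}"
      proof (rule inj_onI)
        fix s t assume s: "s \<in> {1..<Suc k}" and t: "t \<in> {1..<Suc k}" and eq: "g s = g t"
        show "s = t"
        proof (rule ccontr)
          assume "s \<noteq> t"
          then consider "s < t" | "t < s" by linarith
          then show False
          proof cases
            case 1 then show False using gd[of s t] s t eq by auto
          next
            case 2 then show False using gd[of t s] s t eq by auto
          qed
        qed
      qed
      then have inj: "inj_on g (set [1..<Suc k])" by (simp only: set_upt)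
      have "distinct [1..<Suc k]" by (rule distinct_upt)
      then show ?thesis unfolding C_def distinct_rev distinct_map using inj by blast
    qed
    have setC: "\<forall>u\<in>set C. u \<in> {1..m} \<and> u \<noteq> c"
    proof
      fix u assume "u \<in> set C"
      then have "u \<in> g ` set [1..<Suc k]" unfolding C_def by (simp only: set_rev set_map)
      then obtain t where t: "t \<in> set [1..<Suc k]" "u = g t" by blast
      then have t: "t \<le> k" "u = g t" by auto
      then show "u \<in> {1..m} \<and> u \<noteq> c" using gp[of t] by simp
    qed
    have inJ: "(S c C :: (nat \<times> nat, 'k) ncpoly) \<in> fk_ideal m"
      using cyc[OF c distC neC setC] .
    have inF: "(S c C :: (nat \<times> nat, 'k) ncpoly) \<in> free_alg Ed"
      using S_free[OF _ neC] Egn setC by blast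
    have id: "i \<le> d" using less.prems by simp
    have zero: "poly_act a d (S c C) (ev i) (i + Suc k) = 0"
      using H1 inJ inF id by auto
    define L where "L j = map (Pair c) (rw C j)" for j
    have val: "sgl (L j) * word_act a d (map gn (L j)) (ev i) (i + Suc k) = sgl (L j) * wc a i (map gn (L j))"
      if j: "j < k" for j
    proof -
      have "length (map gn (L j)) = Suc k" unfolding L_def using length_rw[OF neC, of j] j lenC by simp
      then show ?thesis using wa_ev[OF id, of a "map gn (L j)"] less.prems by (simp add: ev_def)
    qed
    have v0: "wc a i (map gn (L 0)) \<noteq> 0"
    proof -
      have hdC: "hd C = v" unfolding C_def using k1 by (simp add: hd_rev g_def)
      have "rw C 0 = C @ [v]" using rw_0[OF neC] hdC by simp
      also have "\<dots> = rev (map g [0..<Suc k])"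
        unfolding C_def using upt_conv_Cons[of 0 "Suc k"] by (simp add: g_def)
      finally have eqL: "map gn (L 0) = map (\<lambda>u. gn (c, u)) (rev (map g [0..<Suc k]))"
        unfolding L_def by simp
      have "wc a i (map gn (L 0)) = wc a i (map (\<lambda>u. gn (c, u)) (rev (map g [0..<Suc k])))"
        by (simp only: eqL)
      also have "\<dots> = (\<Prod>t<length (map g [0..<Suc k]). a (i + t) (gn (c, map g [0..<Suc k] ! t)))"
        by (rule wc_rev)
      also have "\<dots> = (\<Prod>t<Suc k. a (i + t) (gn (c, g t)))"
        by (rule prod.cong) (simp_all del: upt_Suc)
      also have "\<dots> \<noteq> 0" using gp by auto
      finally show ?thesis .
    qed
    have vj: "wc a i (map gn (L j)) = 0" if j: "1 \<le> j" "j < k" for j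
    proof -
      obtain Z where Z: "rw C j = Z @ [C ! j]" using rw_last[of j C] j lenC by auto
      have Cj: "C ! j = g (k - j)"
      proof -
        have "Suc (k - Suc j) = k - j" using j by simp
        then show ?thesis unfolding C_def using j by (simp add: rev_nth nth_upt)
      qed
      have "wc a i (map gn (L j)) = a i (gn (c, g (k - j))) * wc a (Suc i) (map gn (map (Pair c) Z))"
        unfolding L_def Z Cj by (simp add: wc_snoc)
      moreover have "a i (gn (c, g (k - j))) = 0" using bk[of "k - j"] j by auto
      ultimately show ?thesis by simp
    qed
    have "poly_act a d (S c C) (ev i) (i + Suc k) = (\<Sum>j<k. sgl (L j) * word_act a d (map gn (L j)) (ev i) (i + Suc k))"
      unfolding S_def L_def lenC by (rule poly_act_sumW) simp
    also have "\<dots> = (\<Sum>j<k. sgl (L j) * wc a i (map gn (L j)))"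
      by (rule sum.cong[OF refl], rule val) simp
    also have "\<dots> = sgl (L 0) * wc a i (map gn (L 0))"
    proof -
      obtain k0 where k0: "k = Suc k0" using k1 by (cases k) auto
      have "(\<Sum>j<k. sgl (L j) * wc a i (map gn (L j))) =
            sgl (L 0) * wc a i (map gn (L 0)) + (\<Sum>j<k0. sgl (L (Suc j)) * wc a i (map gn (L (Suc j))))"
        unfolding k0 by (rule sum.lessThan_Suc_shift)
      moreover have "(\<Sum>j<k0. sgl (L (Suc j)) * wc a i (map gn (L (Suc j)))) = (0::'k)"
        using vj k0 by (intro sum.neutral) auto
      ultimately show ?thesis by simp
    qed
    also have "\<dots> \<noteq> 0" using v0 sgl_nz by simp
    finally show False using zero by simp
  qed
qed



theorem proposition3p3:
  fixes n c d :: nat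
  assumes "alg_closed TYPE('k::field)"
    and "c \<in> {1..n+1}"
    and "d \<ge> n + 1"
  shows "point_modules TYPE('k) (n + 1) (star_edges n c) d = {}"
proof -
  have "\<not> truncated_point_module (n + 1) (star_edges n c) d (a :: nat \<Rightarrow> nat \<times> nat \<Rightarrow> 'k)" for a
  proof
    assume tpm: "truncated_point_module (n + 1) (star_edges n c) d (a :: nat \<Rightarrow> nat \<times> nat \<Rightarrow> 'k)"
    have evM: "ev i \<in> Mspace d" if "i \<le> d" for i
      using that by (simp add: Mspace_def ev_def)
    have H1: "\<forall>f. f \<in> free_alg (star_edges n c) \<longrightarrow> f \<in> fk_ideal (n + 1) \<longrightarrow>
               (\<forall>i\<le>d. poly_act a d f (ev i) = (\<lambda>_. 0))"
      using tpm evM unfolding truncated_point_module_def subalg_rel_ideal_def by blast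
    have d0: "deg0_gen = (ev 0 :: nat \<Rightarrow> 'k)" by (simp add: deg0_gen_def ev_def fun_eq_iff)
    have H2: "\<forall>v\<in>Mspace d. \<exists>f\<in>free_alg (star_edges n c). v = poly_act a d f (ev 0)"
      using tpm unfolding truncated_point_module_def d0 by blast
    have Egn: "\<forall>u. u \<in> {1..n + 1} \<and> u \<noteq> c \<longrightarrow> gn (c, u) \<in> star_edges n c"
      unfolding star_edges_def gn_def by auto
    have N: "\<forall>s<d. \<exists>u. u \<in> {1..n + 1} \<and> u \<noteq> c \<and> a s (gn (c, u)) \<noteq> 0"
    proof (intro allI impI)
      fix s assume s: "s < d"
      obtain x where x: "x \<in> star_edges n c" "a s x \<noteq> 0" using nonzero_step[OF H2 s] by blast
      then obtain u where u: "u \<in> {1..n + 1}" "u \<noteq> c" "x = (min c u, max c u)"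
        unfolding star_edges_def by blast
      then have "x = gn (c, u)" by (simp add: gn_def)
      then show "\<exists>u. u \<in> {1..n + 1} \<and> u \<noteq> c \<and> a s (gn (c, u)) \<noteq> 0" using u x by blast
    qed
    note DM = disj_main[OF assms(2) H1 Egn N]
    define \<phi> where "\<phi> s = (SOME u. u \<in> {1..n + 1} \<and> u \<noteq> c \<and> a s (gn (c, u)) \<noteq> 0)" for s
    have \<phi>: "\<phi> s \<in> {1..n + 1} \<and> \<phi> s \<noteq> c \<and> a s (gn (c, \<phi> s)) \<noteq> 0" if "s < d" for s
      unfolding \<phi>_def using N that by (metis (mono_tags, lifting) someI_ex)
    have neq: "\<phi> s \<noteq> \<phi> t" if st: "s < t" "t \<le> n" for s t
    proof
      assume eq: "\<phi> s = \<phi> t"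
      have "a (s + (t - s)) (gn (c, \<phi> s)) = 0"
        using DM[of "t - s" s "\<phi> s"] \<phi>[of s] st assms(3) by auto
      moreover have "s + (t - s) = t" using st by simp
      ultimately show False using \<phi>[of t] st assms(3) eq by auto
    qed
    have inj: "inj_on \<phi> {0..n}"
    proof (rule inj_onI)
      fix s t assume "s \<in> {0..n}" "t \<in> {0..n}" "\<phi> s = \<phi> t"
      then show "s = t" using neq[of s t] neq[of t s] by (metis atLeastAtMost_iff linorder_neqE_nat)
    qed
    have sub: "\<phi> ` {0..n} \<subseteq> {1..n + 1} - {c}"
    proof
      fix u assume "u \<in> \<phi> ` {0..n}"
      then obtain s where s: "s \<le> n" "u = \<phi> s" by auto
      have "s < d" using s assms(3) by simp
      from \<phi>[OF this] s show "u \<in> {1..n + 1} - {c}" by simp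
    qed
    have "card (\<phi> ` {0..n}) = Suc n" using card_image[OF inj] by simp
    moreover have "card (\<phi> ` {0..n}) \<le> card ({1..n + 1} - {c})"
      by (rule card_mono[OF _ sub]) simp
    moreover have "card ({1..n + 1} - {c}) = n" using assms(2) by simp
    ultimately show False by simp
  qed
  then show ?thesis unfolding point_modules_def by blast
qed


end
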